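(* Let $X$ and $Y$ be Banach spaces and let $T\in B(X)$ and $S\in B(Y)$ be compact operators that are equivalent after extension. Then there exist operators $G\in B(Y,X)$, $H\in B(X,Y)$ and a finite rank operator $R\in B(X)$ such that $T=GSH+R$.
   Context: All Banach spaces are complex; $B(X,Y)$ denotes the bounded linear operators from $X$ to $Y$, $B(X)=B(X,X)$; invertibility of an operator means it has a bounded inverse. $X\oplus Y$ denotes the $\ell^2$-direct sum and $\mathrm{id}_X$ the identity on $X$. Operators $T\in B(X)$ and $S\in B(Y)$ are called equivalent after extension if there exist Banach spaces $X'$, $Y'$ and invertible operators $E\in B(Y\oplus Y',X\oplus X')$ and $F\in B(X\oplus X',Y\oplus Y')$ with $\begin{bmatrix}T&0\\0&\mathrm{id}_{X'}\end{bmatrix}=E\begin{bmatrix}S&0\\0&\mathrm{id}_{Y'}\end{bmatrix}F$. *)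

theory Defs
  imports "HOL-Analysis.Analysis"
begin

class complex_banach = banach +
  fixes scaleC :: "complex \<Rightarrow> 'a \<Rightarrow> 'a"
  assumes scaleC_add_right: "scaleC c (x + y) = scaleC c x + scaleC c y"
    and scaleC_add_left: "scaleC (c + d) x = scaleC c x + scaleC d x"
    and scaleC_scaleC: "scaleC c (scaleC d x) = scaleC (c * d) x"
    and scaleC_one: "scaleC 1 x = x"
    and scaleR_scaleC: "scaleR r x = scaleC (complex_of_real r) x"
    and norm_scaleC: "norm (scaleC c x) = cmod c * norm x"

text \<open>The l2-direct sum X (+) Y is the product type, whose norm is
  sqrt (norm x ^ 2 + norm y ^ 2) (lemma norm_Pair).\<close>

instantiation prod :: (complex_banach, complex_banach) complex_banach
begin
definition scaleC_prod_def: "scaleC c p = (scaleC c (fst p), scaleC c (snd p))"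
instance
proof
  fix c d :: complex and x y :: "'a \<times> 'b" and r :: real
  show "scaleC c (x + y) = scaleC c x + scaleC c y"
    by (simp add: scaleC_prod_def scaleC_add_right)
  show "scaleC (c + d) x = scaleC c x + scaleC d x"
    by (simp add: scaleC_prod_def scaleC_add_left)
  show "scaleC c (scaleC d x) = scaleC (c * d) x"
    by (simp add: scaleC_prod_def scaleC_scaleC)
  show "scaleC 1 x = x" by (simp add: scaleC_prod_def scaleC_one)
  show "scaleR r x = scaleC (complex_of_real r) x"
    by (simp add: scaleC_prod_def scaleR_scaleC prod_eq_iff)
  show "norm (scaleC c x) = cmod c * norm x"
  proof -
    have "norm (scaleC c x) = sqrt ((cmod c)\<^sup>2 * ((norm (fst x))\<^sup>2 + (norm (snd x))\<^sup>2))"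
      by (simp add: scaleC_prod_def norm_prod_def norm_scaleC power_mult_distrib algebra_simps)
    also have "\<dots> = cmod c * norm x"
      by (simp add: real_sqrt_mult norm_prod_def)
    finally show ?thesis .
  qed
qed
end

definition bounded_clinear :: "('a::complex_banach \<Rightarrow> 'b::complex_banach) \<Rightarrow> bool" where
  "bounded_clinear f \<longleftrightarrow> bounded_linear f \<and> (\<forall>c x. f (scaleC c x) = scaleC c (f x))"

definition invertible_op :: "('a::complex_banach \<Rightarrow> 'b::complex_banach) \<Rightarrow> bool" where
  "invertible_op f \<longleftrightarrow> bounded_clinear f \<and>
     (\<exists>g. bounded_clinear g \<and> g \<circ> f = id \<and> f \<circ> g = id)"

definition diag_id :: "('a \<Rightarrow> 'a) \<Rightarrow> ('a \<times> 'c \<Rightarrow> 'a \<times> 'c)" where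
  "diag_id T = (\<lambda>(x, x'). (T x, x'))"

definition compact_op :: "('a::complex_banach \<Rightarrow> 'b::complex_banach) \<Rightarrow> bool" where
  "compact_op T \<longleftrightarrow> bounded_clinear T \<and> compact (closure (T ` ball 0 1))"

definition finite_rank :: "('a::complex_banach \<Rightarrow> 'b::complex_banach) \<Rightarrow> bool" where
  "finite_rank R \<longleftrightarrow> bounded_clinear R \<and>
     (\<exists>B. finite B \<and> range R \<subseteq> {\<Sum>b\<in>B. scaleC (c b) b | c. True})"

end

theory Submission
  imports Defs
begin
lemma infdist_near: "A \<noteq> {} \<Longrightarrow> infdist x A < d \<Longrightarrow> \<exists>a\<in>A. dist x a < d"
  by (simp add: infdist_notempty cINF_less_iff)

definition cpt :: "('a::real_normed_vector \<Rightarrow> 'b::real_normed_vector) \<Rightarrow> bool" where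
  "cpt K \<longleftrightarrow> bounded_linear K \<and>
     (\<forall>x::nat\<Rightarrow>'a. bounded (range x) \<longrightarrow> (\<exists>r l. strict_mono r \<and> ((\<lambda>n. K (x (r n))) \<longlonglongrightarrow> l)))"

lemma compact_op_cpt:
  assumes "compact_op T" shows "cpt T"
proof -
  have bl: "bounded_linear T" and cp: "compact (closure (T ` ball 0 1))"
    using assms by (auto simp: compact_op_def bounded_clinear_def)
  show ?thesis unfolding cpt_def
  proof (intro conjI allI impI bl)
    fix x :: "nat \<Rightarrow> 'a" assume "bounded (range x)"
    then obtain B where B: "B > 0" "\<And>n. norm (x n) \<le> B"
      by (meson bounded_pos rangeI)
    define y where "y n = T ((1/(2*B)) *\<^sub>R x n)" for n
    have "y n \<in> closure (T ` ball 0 1)" for n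
    proof -
      have "norm ((1/(2*B)) *\<^sub>R x n) = norm (x n) / (2*B)" using B by simp
      also have "\<dots> < 1" using B(1) B(2)[of n] by (simp add: field_simps)
      finally show ?thesis unfolding y_def by (intro closure_subset[THEN subsetD]) auto
    qed
    then obtain l r where r: "strict_mono r" "(y \<circ> r) \<longlonglongrightarrow> l"
      using cp unfolding compact_def by blast
    have "(\<lambda>n. (2*B) *\<^sub>R y (r n)) \<longlonglongrightarrow> (2*B) *\<^sub>R l"
      using r(2) by (intro tendsto_scaleR) (auto simp: o_def)
    moreover have "(2*B) *\<^sub>R y (r n) = T (x (r n))" for n
      using B(1) bl by (simp add: y_def linear_simps bounded_linear.linear)
    ultimately show "\<exists>r l. strict_mono r \<and> (\<lambda>n. T (x (r n))) \<longlonglongrightarrow> l"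
      using r(1) by auto
  qed
qed

lemma bounded_range_subseq: "bounded (range x) \<Longrightarrow> bounded (range (\<lambda>n. x (r n)))"
  by (rule bounded_subset) auto

lemma cpt_add:
  assumes "cpt K1" "cpt K2" shows "cpt (\<lambda>x. K1 x + K2 x)"
  unfolding cpt_def
proof (intro conjI allI impI)
  show "bounded_linear (\<lambda>x. K1 x + K2 x)"
    using assms by (auto simp: cpt_def intro: bounded_linear_add)
  fix x :: "nat \<Rightarrow> 'a" assume bx: "bounded (range x)"
  obtain r1 l1 where r1: "strict_mono r1" "(\<lambda>n. K1 (x (r1 n))) \<longlonglongrightarrow> l1"
    using assms(1) bx unfolding cpt_def by blast
  obtain r2 l2 where r2: "strict_mono r2" "(\<lambda>n. K2 (x (r1 (r2 n)))) \<longlonglongrightarrow> l2"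
    using assms(2) bounded_range_subseq[OF bx, of r1] unfolding cpt_def by blast
  have "(\<lambda>n. K1 (x (r1 (r2 n)))) \<longlonglongrightarrow> l1"
    using LIMSEQ_subseq_LIMSEQ[OF r1(2) r2(1)] by (simp add: o_def)
  then have "(\<lambda>n. K1 (x (r1 (r2 n))) + K2 (x (r1 (r2 n)))) \<longlonglongrightarrow> l1 + l2"
    using r2(2) by (intro tendsto_add)
  moreover have "strict_mono (r1 \<circ> r2)" using r1(1) r2(1) by (rule strict_mono_o)
  ultimately show "\<exists>r l. strict_mono r \<and> (\<lambda>n. K1 (x (r n)) + K2 (x (r n))) \<longlonglongrightarrow> l"
    by (auto simp: o_def)
qed

lemma cpt_comp_right:
  fixes K :: "'b::real_normed_vector \<Rightarrow> 'c::real_normed_vector" and L :: "'a::real_normed_vector \<Rightarrow> 'b"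
  assumes "cpt K" "bounded_linear L" shows "cpt (\<lambda>x. K (L x))"
  unfolding cpt_def
proof (intro conjI allI impI)
  show "bounded_linear (\<lambda>x. K (L x))"
    using assms by (auto simp: cpt_def intro: bounded_linear_compose)
  fix x :: "nat \<Rightarrow> 'a" assume bx: "bounded (range x)"
  obtain C where C: "\<And>y. norm (L y) \<le> norm y * C" using assms(2) bounded_linear.bounded by blast
  obtain B where B: "\<And>n. norm (x n) \<le> B" using bx by (meson bounded_iff rangeI)
  have "bounded (range (\<lambda>n. L (x n)))"
    unfolding bounded_iff
  proof (intro exI ballI)
    fix y assume "y \<in> range (\<lambda>n. L (x n))"
    then obtain n where "y = L (x n)" by auto
    have "norm (L (x n)) \<le> norm (x n) * C" by (rule C)
    also have "\<dots> \<le> norm (x n) * abs C" by (intro mult_left_mono) auto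
    also have "\<dots> \<le> B * abs C" by (intro mult_right_mono B) auto
    finally show "norm y \<le> B * abs C" using \<open>y = _\<close> by simp
  qed
  then show "\<exists>r l. strict_mono r \<and> (\<lambda>n. K (L (x (r n)))) \<longlonglongrightarrow> l"
    using assms(1) unfolding cpt_def by blast
qed

lemma cpt_comp_left:
  fixes K :: "'a::real_normed_vector \<Rightarrow> 'b::real_normed_vector" and L :: "'b \<Rightarrow> 'c::real_normed_vector"
  assumes "bounded_linear L" "cpt K" shows "cpt (\<lambda>x. L (K x))"
  unfolding cpt_def
proof (intro conjI allI impI)
  show "bounded_linear (\<lambda>x. L (K x))"
    using assms by (auto simp: cpt_def intro: bounded_linear_compose)
  fix x :: "nat \<Rightarrow> 'a" assume bx: "bounded (range x)"
  then obtain r l where "strict_mono r" "(\<lambda>n. K (x (r n))) \<longlonglongrightarrow> l"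
    using assms(2) unfolding cpt_def by blast
  then show "\<exists>r l. strict_mono r \<and> (\<lambda>n. L (K (x (r n)))) \<longlonglongrightarrow> l"
    using bounded_linear.tendsto[OF assms(1)] by blast
qed

lemma cpt_sep:
  fixes K :: "'a::real_normed_vector \<Rightarrow> 'b::real_normed_vector" and x :: "nat \<Rightarrow> 'a"
  assumes "cpt K" "\<And>n. norm (x n) \<le> 1" "e > 0"
    and "\<And>i j. i < j \<Longrightarrow> e \<le> norm (K (x i) - K (x j))"
  shows False
proof -
  have "bounded (range x)" using assms(2) by (auto simp: bounded_iff)
  then obtain r l where r: "strict_mono r" "(\<lambda>n. K (x (r n))) \<longlonglongrightarrow> l"
    using assms(1) unfolding cpt_def by blast
  from r(2) have "Cauchy (\<lambda>n. K (x (r n)))" by (rule LIMSEQ_imp_Cauchy)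
  then obtain M where M: "\<And>m n. m \<ge> M \<Longrightarrow> n \<ge> M \<Longrightarrow> dist (K (x (r m))) (K (x (r n))) < e"
    using assms(3) unfolding Cauchy_def by blast
  have "r M < r (Suc M)" using r(1) by (simp add: strict_mono_def)
  then have "e \<le> norm (K (x (r M)) - K (x (r (Suc M))))" by (rule assms(4))
  moreover have "dist (K (x (r M))) (K (x (r (Suc M)))) < e" by (rule M) auto
  ultimately show False by (simp add: dist_norm)
qed

lemma cpt_bl: "cpt K \<Longrightarrow> bounded_linear K" by (simp add: cpt_def)

lemma cpt_limit:
  fixes K :: "'a::real_normed_vector \<Rightarrow> 'a"
  assumes "cpt K" "bounded (range x)" "(\<lambda>n. x n - K (x n)) \<longlonglongrightarrow> y"
  shows "\<exists>r z. strict_mono r \<and> (\<lambda>n. x (r n)) \<longlonglongrightarrow> z \<and> z - K z = y"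
proof -
  obtain r l where r: "strict_mono r" "(\<lambda>n. K (x (r n))) \<longlonglongrightarrow> l"
    using assms(1,2) unfolding cpt_def by blast
  have y: "(\<lambda>n. x (r n) - K (x (r n))) \<longlonglongrightarrow> y"
    using LIMSEQ_subseq_LIMSEQ[OF assms(3) r(1)] by (simp add: o_def)
  have "(\<lambda>n. (x (r n) - K (x (r n))) + K (x (r n))) \<longlonglongrightarrow> y + l"
    using y r(2) by (rule tendsto_add)
  then have z: "(\<lambda>n. x (r n)) \<longlonglongrightarrow> y + l" by simp
  have "(\<lambda>n. x (r n) - K (x (r n))) \<longlonglongrightarrow> (y + l) - K (y + l)"
    using z bounded_linear.tendsto[OF cpt_bl[OF assms(1)] z] by (rule tendsto_diff)
  then have "(y + l) - K (y + l) = y" using y LIMSEQ_unique by blast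
  then show ?thesis using r(1) z by blast
qed

lemma lim_inv_suc: "(\<lambda>n. 1 / real (Suc n)) \<longlonglongrightarrow> 0"
  using LIMSEQ_inverse_real_of_nat by (simp add: inverse_eq_divide)

lemma null_by_bound:
  assumes "\<And>n. norm (f n) \<le> 1 / real (Suc n)" shows "f \<longlonglongrightarrow> 0"
  by (rule Lim_null_comparison[OF _ lim_inv_suc]) (use assms in auto)

lemma cpt_bdd_below:
  fixes K :: "'a::real_normed_vector \<Rightarrow> 'a"
  assumes "cpt K" "closed M" "subspace M" "\<And>x. x \<in> M \<Longrightarrow> x - K x = 0 \<Longrightarrow> x = 0"
  shows "\<exists>C>0. \<forall>x\<in>M. norm x \<le> C * norm (x - K x)"
proof (rule ccontr)
  assume neg: "\<not> ?thesis"
  have lin: "linear K" using cpt_bl[OF assms(1)] bounded_linear.linear by blast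
  have "\<exists>u. u \<in> M \<and> norm u = 1 \<and> norm (u - K u) \<le> 1 / real (Suc n)" for n
  proof -
    have "\<not> (\<forall>x\<in>M. norm x \<le> real (Suc n) * norm (x - K x))"
    proof
      assume h: "\<forall>x\<in>M. norm x \<le> real (Suc n) * norm (x - K x)"
      have "real (Suc n) > 0" by simp
      then show False using neg h by blast
    qed
    then obtain x where x: "x \<in> M" "\<not> norm x \<le> real (Suc n) * norm (x - K x)"
      by blast
    have "0 \<le> real (Suc n) * norm (x - K x)" by simp
    then have nx: "norm x > 0" using x(2) by linarith
    define u where "u = (1 / norm x) *\<^sub>R x"
    have uM: "u \<in> M" unfolding u_def using x(1) assms(3) by (simp add: subspace_scale)
    have nu: "norm u = 1" unfolding u_def using nx by simp
    have "u - K u = (1 / norm x) *\<^sub>R (x - K x)" unfolding u_def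
      by (simp add: linear_scale[OF lin] scaleR_diff_right)
    then have "norm (u - K u) = norm (x - K x) / norm x" using nx by simp
    also have "\<dots> \<le> 1 / real (Suc n)"
    proof -
      have "real (Suc n) * norm (x - K x) < norm x" using x(2) by simp
      then show ?thesis using nx by (simp add: field_simps)
    qed
    finally show ?thesis using uM nu by blast
  qed
  then have "\<forall>n. \<exists>u. u \<in> M \<and> norm u = 1 \<and> norm (u - K u) \<le> 1 / real (Suc n)" by blast
  then have "\<exists>u. \<forall>n. u n \<in> M \<and> norm (u n) = 1 \<and> norm (u n - K (u n)) \<le> 1 / real (Suc n)"
    by (rule choice)
  then obtain u where u0: "\<forall>n. u n \<in> M \<and> norm (u n) = 1 \<and> norm (u n - K (u n)) \<le> 1 / real (Suc n)"
    by blast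
  then have u: "\<And>n. u n \<in> M" "\<And>n. norm (u n) = 1"
    "\<And>n. norm (u n - K (u n)) \<le> 1 / real (Suc n)" by auto
  have b: "bounded (range u)" using u(2) by (auto simp: bounded_iff)
  have "(\<lambda>n. u n - K (u n)) \<longlonglongrightarrow> 0" using u(3) by (rule null_by_bound)
  then obtain r z where rz: "strict_mono r" "(\<lambda>n. u (r n)) \<longlonglongrightarrow> z" "z - K z = 0"
    using cpt_limit[OF assms(1) b] by blast
  have "\<And>n. u (r n) \<in> M" using u(1) by blast
  from closed_sequentially[OF assms(2) this rz(2)] have "z \<in> M" .
  then have "z = 0" using assms(4) rz(3) by blast
  have "(\<lambda>n. norm (u (r n))) \<longlonglongrightarrow> norm z" using rz(2) by (rule tendsto_norm)
  then have "norm z = 1" using u(2) by (simp add: LIMSEQ_const_iff)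
  then show False using \<open>z = 0\<close> by simp
qed

lemma closed_kernel:
  assumes "bounded_linear f" shows "closed {x. f x = 0}"
proof -
  have "continuous_on UNIV f" using assms linear_continuous_on by blast
  then show ?thesis using closed_vimage[of "{0}" f] by (simp add: vimage_def)
qed

lemma cpt_infdist:
  fixes K :: "'a::real_normed_vector \<Rightarrow> 'a"
  assumes "cpt K"
  shows "\<exists>C>0. \<forall>x. infdist x {v. v - K v = 0} \<le> C * norm (x - K x)"
proof (rule ccontr)
  define N0 where "N0 = {v. v - K v = 0}"
  assume neg: "\<not> ?thesis"
  have lin: "linear K" using cpt_bl[OF assms(1)] bounded_linear.linear by blast
  have N0ne: "N0 \<noteq> {}" unfolding N0_def using linear_0[OF lin] by (metis (mono_tags) diff_self empty_iff mem_Collect_eq)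
  have N0sub: "a + t *\<^sub>R v \<in> N0" if "a \<in> N0" "v \<in> N0" for a v t
    using that unfolding N0_def by (simp add: linear_add[OF lin] linear_scale[OF lin] algebra_simps)
  have "\<exists>u. norm u = 1 \<and> norm (u - K u) \<le> 1 / real (Suc n) \<and> (\<forall>v\<in>N0. 1/2 \<le> norm (u - v))" for n
  proof -
    have "\<not> (\<forall>x. infdist x N0 \<le> real (Suc n) * norm (x - K x))"
    proof
      assume h: "\<forall>x. infdist x N0 \<le> real (Suc n) * norm (x - K x)"
      have "real (Suc n) > 0" by simp
      then show False using neg h unfolding N0_def by blast
    qed
    then obtain x where x: "\<not> infdist x N0 \<le> real (Suc n) * norm (x - K x)"
      by blast
    define d where "d = infdist x N0"
    have "0 \<le> real (Suc n) * norm (x - K x)" by simp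
    then have d0: "d > 0" using x unfolding d_def by linarith
    obtain a where a: "a \<in> N0" "dist x a < 2 * d"
      using infdist_near[OF N0ne, of x "2*d"] d0 unfolding d_def by auto
    define t where "t = norm (x - a)"
    have dt: "d \<le> t" unfolding d_def t_def using infdist_le[OF a(1), of x] by (simp add: dist_norm)
    have t2: "t < 2 * d" using a(2) by (simp add: t_def dist_norm)
    have t0: "t > 0" using dt d0 by simp
    define u where "u = (1/t) *\<^sub>R (x - a)"
    have nu: "norm u = 1" unfolding u_def using t0 t_def by simp
    have Ka: "K a = a" using a(1) unfolding N0_def by simp
    have "u - K u = (1/t) *\<^sub>R (x - K x)" unfolding u_def
      by (simp add: linear_scale[OF lin] linear_diff[OF lin] Ka algebra_simps)
    then have "norm (u - K u) = norm (x - K x) / t" using t0 by simp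
    also have "\<dots> \<le> 1 / real (Suc n)"
    proof -
      have "real (Suc n) * norm (x - K x) < d" using x unfolding d_def by simp
      also have "\<dots> \<le> t" by (rule dt)
      finally show ?thesis using t0 by (simp add: field_simps)
    qed
    finally have c2: "norm (u - K u) \<le> 1 / real (Suc n)" .
    have c3: "1/2 \<le> norm (u - v)" if "v \<in> N0" for v
    proof -
      have "d \<le> dist x (a + t *\<^sub>R v)" unfolding d_def by (rule infdist_le[OF N0sub[OF a(1) that]])
      also have "\<dots> = norm (t *\<^sub>R (u - v))" unfolding u_def dist_norm using t0
        by (simp add: algebra_simps)
      also have "\<dots> = t * norm (u - v)" using t0 by simp
      finally have dd: "d \<le> t * norm (u - v)" .
      show ?thesis
      proof (rule ccontr)
        assume "\<not> 1/2 \<le> norm (u - v)"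
        then have "t * norm (u - v) < t * (1/2)" using t0 by (intro mult_strict_left_mono) auto
        then show False using dd t2 by linarith
      qed
    qed
    show ?thesis using nu c2 c3 by blast
  qed
  then have "\<forall>n. \<exists>u. norm u = 1 \<and> norm (u - K u) \<le> 1 / real (Suc n) \<and> (\<forall>v\<in>N0. 1/2 \<le> norm (u - v))" by blast
  then have "\<exists>u. \<forall>n. norm (u n) = 1 \<and> norm (u n - K (u n)) \<le> 1 / real (Suc n) \<and> (\<forall>v\<in>N0. 1/2 \<le> norm (u n - v))"
    by (rule choice)
  then obtain u where u0: "\<forall>n. norm (u n) = 1 \<and> norm (u n - K (u n)) \<le> 1 / real (Suc n) \<and> (\<forall>v\<in>N0. 1/2 \<le> norm (u n - v))"
    by blast
  then have u: "\<And>n. norm (u n) = 1" "\<And>n. norm (u n - K (u n)) \<le> 1 / real (Suc n)"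
    "\<And>n v. v \<in> N0 \<Longrightarrow> 1/2 \<le> norm (u n - v)" by auto
  have b: "bounded (range u)" using u(1) by (auto simp: bounded_iff)
  have "(\<lambda>n. u n - K (u n)) \<longlonglongrightarrow> 0" using u(2) by (rule null_by_bound)
  then obtain r z where rz: "strict_mono r" "(\<lambda>n. u (r n)) \<longlonglongrightarrow> z" "z - K z = 0"
    using cpt_limit[OF assms(1) b] by blast
  have zN: "z \<in> N0" using rz(3) unfolding N0_def by simp
  obtain no where "\<forall>n\<ge>no. norm (u (r n) - z) < 1/2"
    using LIMSEQ_D[OF rz(2), of "1/2"] by auto
  then have "norm (u (r no) - z) < 1/2" by auto
  then show False using u(3)[OF zN, of "r no"] by simp
qed

lemma riesz:
  fixes S Z :: "'a::real_normed_vector set"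
  assumes "subspace S" "closed S" "subspace Z" "S \<subseteq> Z" "z0 \<in> Z" "z0 \<notin> S"
  shows "\<exists>z\<in>Z. norm z = 1 \<and> (\<forall>y\<in>S. 1/2 \<le> norm (z - y))"
proof -
  have Sne: "S \<noteq> {}" using subspace_0[OF assms(1)] by blast
  define d where "d = infdist z0 S"
  have d0: "d > 0" unfolding d_def using infdist_pos_not_in_closed[OF assms(2) Sne assms(6)] .
  obtain y0 where y0: "y0 \<in> S" "dist z0 y0 < 2 * d"
    using infdist_near[OF Sne, of z0 "2*d"] d0 unfolding d_def by auto
  define t where "t = norm (z0 - y0)"
  have dt: "d \<le> t" unfolding d_def t_def using infdist_le[OF y0(1), of z0] by (simp add: dist_norm)
  have t2: "t < 2 * d" using y0(2) by (simp add: t_def dist_norm)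
  have t0: "t > 0" using dt d0 by simp
  define z where "z = (1/t) *\<^sub>R (z0 - y0)"
  have zZ: "z \<in> Z" unfolding z_def
    using assms(3,4,5) y0(1) by (intro subspace_scale subspace_diff) auto
  have nz: "norm z = 1" unfolding z_def using t0 t_def by simp
  have "1/2 \<le> norm (z - y)" if "y \<in> S" for y
  proof -
    have yS: "y0 + t *\<^sub>R y \<in> S" using assms(1) y0(1) that by (intro subspace_add subspace_scale)
    have "d \<le> dist z0 (y0 + t *\<^sub>R y)" unfolding d_def by (rule infdist_le[OF yS])
    also have "\<dots> = norm (t *\<^sub>R (z - y))" unfolding z_def dist_norm using t0
      by (simp add: algebra_simps)
    also have "\<dots> = t * norm (z - y)" using t0 by simp
    finally have dd: "d \<le> t * norm (z - y)" .
    show ?thesis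
    proof (rule ccontr)
      assume "\<not> 1/2 \<le> norm (z - y)"
      then have "t * norm (z - y) < t * (1/2)" using t0 by (intro mult_strict_left_mono) auto
      then show False using dd t2 by linarith
    qed
  qed
  then show ?thesis using zZ nz by blast
qed

lemma closed_span_insert:
  fixes a :: "'a::real_normed_vector"
  assumes cS: "closed (span S)" shows "closed (span (insert a S))"
proof (cases "a \<in> span S")
  case True
  then show ?thesis using cS by (simp add: span_redundant)
next
  case False
  have Sne: "span S \<noteq> {}" using span_zero by blast
  define d where "d = infdist a (span S)"
  have d0: "d > 0" unfolding d_def using infdist_pos_not_in_closed[OF cS Sne False] .
  show ?thesis unfolding closed_sequential_limits
  proof (intro allI impI, elim conjE)
    fix f l assume f: "\<forall>n. f n \<in> span (insert a S)" and fl: "f \<longlonglongrightarrow> l"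
    have "\<forall>n. \<exists>k. f n - k *\<^sub>R a \<in> span S" using f by (simp add: span_insert)
    then have "\<exists>k. \<forall>n. f n - k n *\<^sub>R a \<in> span S" by (rule choice)
    then obtain k where k: "\<And>n. f n - k n *\<^sub>R a \<in> span S" by blast
    obtain B where B: "B > 0" "\<And>n. norm (f n) \<le> B"
      using convergent_imp_Bseq[of f] fl by (auto simp: convergent_def Bseq_def)
    have kb: "abs (k n) * d \<le> norm (f n)" for n
    proof (cases "k n = 0")
      case True then show ?thesis by simp
    next
      case False
      define s where "s = f n - k n *\<^sub>R a"
      have "- (1 / k n) *\<^sub>R s \<in> span S" using k[of n] unfolding s_def by (intro span_scale) auto
      then have "d \<le> dist a (- (1 / k n) *\<^sub>R s)" unfolding d_def by (rule infdist_le)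
      also have "\<dots> = norm ((1 / k n) *\<^sub>R f n)" unfolding s_def dist_norm using False
        by (simp add: algebra_simps)
      also have "\<dots> = norm (f n) / abs (k n)" by simp
      finally show ?thesis using False by (simp add: field_simps)
    qed
    have "bounded (range k)"
      unfolding bounded_iff
    proof (intro exI ballI)
      fix x assume "x \<in> range k"
      then obtain n where "x = k n" by auto
      have "abs (k n) * d \<le> B" using kb[of n] B(2)[of n] by linarith
      then have "abs (k n) \<le> B / d" using d0 by (simp add: field_simps)
      then show "norm x \<le> B / d" using \<open>x = k n\<close> by simp
    qed
    then obtain \<kappa> r where r: "strict_mono r" "(k \<circ> r) \<longlonglongrightarrow> \<kappa>"
      using bounded_imp_convergent_subsequence by blast
    have "(\<lambda>n. f (r n) - k (r n) *\<^sub>R a) \<longlonglongrightarrow> l - \<kappa> *\<^sub>R a"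
    proof (intro tendsto_diff tendsto_scaleR)
      show "(\<lambda>n. f (r n)) \<longlonglongrightarrow> l" using LIMSEQ_subseq_LIMSEQ[OF fl r(1)] by (simp add: o_def)
      show "(\<lambda>n. k (r n)) \<longlonglongrightarrow> \<kappa>" using r(2) by (simp add: o_def)
    qed auto
    then show "l \<in> span (insert a S)"
      using closed_sequentially[OF cS, of "\<lambda>n. f (r n) - k (r n) *\<^sub>R a"] k by (auto simp: span_insert)
  qed
qed

lemma closed_span_finite:
  fixes S :: "'a::real_normed_vector set"
  assumes "finite S" shows "closed (span S)"
  using assms
proof (induction S rule: finite_induct)
  case empty then show ?case by simp
next
  case (insert x F)
  from insert.IH have "closed (span (insert x F))" by (rule closed_span_insert)
  then show ?case by assumption
qed

lemma cpt_closed_range: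
  fixes K :: "'a::real_normed_vector \<Rightarrow> 'a"
  assumes "cpt K" shows "closed (range (\<lambda>x. x - K x))"
proof -
  define N0 where "N0 = {v. v - K v = 0}"
  have lin: "linear K" using cpt_bl[OF assms(1)] bounded_linear.linear by blast
  have N0ne: "N0 \<noteq> {}" unfolding N0_def using linear_0[OF lin] by (metis (mono_tags) diff_self empty_iff mem_Collect_eq)
  obtain C where C: "C > 0" "\<And>x. infdist x N0 \<le> C * norm (x - K x)"
    using cpt_infdist[OF assms] unfolding N0_def by blast
  show ?thesis unfolding closed_sequential_limits
  proof (intro allI impI, elim conjE)
    fix f l assume f: "\<forall>n. f n \<in> range (\<lambda>x. x - K x)" and fl: "f \<longlonglongrightarrow> l"
    obtain B where B: "B > 0" "\<And>n. norm (f n) \<le> B"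
      using convergent_imp_Bseq[of f] fl by (auto simp: convergent_def Bseq_def)
    have "\<forall>n. \<exists>w. w - K w = f n \<and> norm w \<le> C * B + 1"
    proof
      fix n
      obtain x where x: "f n = x - K x" using f by auto
      have "infdist x N0 \<le> C * norm (f n)" using C(2)[of x] x by simp
      also have "\<dots> \<le> C * B" using C(1) B(2)[of n] by (intro mult_left_mono) auto
      finally have "infdist x N0 < C * B + 1" by simp
      then obtain a where a: "a \<in> N0" "dist x a < C * B + 1" using infdist_near[OF N0ne] by blast
      have "(x - a) - K (x - a) = f n" using a(1) x unfolding N0_def by (simp add: linear_diff[OF lin])
      moreover have "norm (x - a) \<le> C * B + 1" using a(2) by (simp add: dist_norm)
      ultimately show "\<exists>w. w - K w = f n \<and> norm w \<le> C * B + 1" by blast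
    qed
    then have "\<exists>w. \<forall>n. w n - K (w n) = f n \<and> norm (w n) \<le> C * B + 1" by (rule choice)
    then obtain w where w: "\<And>n. w n - K (w n) = f n" "\<And>n. norm (w n) \<le> C * B + 1" by blast
    have "bounded (range w)" using w(2) by (auto simp: bounded_iff)
    moreover have "(\<lambda>n. w n - K (w n)) \<longlonglongrightarrow> l" using fl w(1) by simp
    ultimately obtain r z where "z - K z = l" using cpt_limit[OF assms] by blast
    then show "l \<in> range (\<lambda>x. x - K x)" by (metis rangeI)
  qed
qed

lemma cpt_fixed_finite:
  fixes K :: "'a::real_normed_vector \<Rightarrow> 'a"
  assumes "cpt K" shows "\<exists>S. finite S \<and> {x. x - K x = 0} \<subseteq> span S"
proof (rule ccontr)
  define F where "F = {x. x - K x = 0}"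
  assume neg: "\<not> (\<exists>S. finite S \<and> {x. x - K x = 0} \<subseteq> span S)"
  have bl: "bounded_linear K" using cpt_bl[OF assms(1)] .
  have lin: "linear K" using bl bounded_linear.linear by blast
  have subF: "subspace F" unfolding F_def subspace_def
    by (simp add: linear_add[OF lin] linear_scale[OF lin] linear_0[OF lin] algebra_simps)
  have clF: "closed F" unfolding F_def
    by (rule closed_kernel) (intro bounded_linear_sub bounded_linear_ident bl)
  have step: "\<exists>z. z \<in> F \<and> norm z = 1 \<and> (\<forall>y\<in>span S. 1/2 \<le> norm (z - y))"
    if "finite S" "S \<subseteq> F" for S
  proof -
    have "\<not> F \<subseteq> span S"
    proof
      assume "F \<subseteq> span S"
      then have "finite S \<and> {x. x - K x = 0} \<subseteq> span S" using that(1) unfolding F_def by simp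
      then show False using neg by blast
    qed
    then obtain z0 where z0: "z0 \<in> F" "z0 \<notin> span S" by blast
    have "span S \<subseteq> F" using that(2) subF by (rule span_minimal)
    from riesz[OF subspace_span closed_span_finite[OF that(1)] subF this z0]
    show ?thesis by blast
  qed
  define g where "g S = (SOME z. z \<in> F \<and> norm z = 1 \<and> (\<forall>y\<in>span S. 1/2 \<le> norm (z - y)))" for S
  have g: "g S \<in> F \<and> norm (g S) = 1 \<and> (\<forall>y\<in>span S. 1/2 \<le> norm (g S - y))"
    if "finite S" "S \<subseteq> F" for S
    unfolding g_def using someI_ex[OF step[OF that]] .
  define xs :: "nat \<Rightarrow> 'a list" where "xs = rec_nat [] (\<lambda>n l. l @ [g (set l)])"
  have xs0: "xs 0 = []" and xsS: "xs (Suc n) = xs n @ [g (set (xs n))]" for n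
    unfolding xs_def by simp_all
  have inv: "set (xs n) \<subseteq> F" for n
  proof (induction n)
    case 0 then show ?case by (simp add: xs0)
  next
    case (Suc n) then show ?case using g[of "set (xs n)"] by (simp add: xsS)
  qed
  define x where "x n = g (set (xs n))" for n
  have xp: "x n \<in> F \<and> norm (x n) = 1 \<and> (\<forall>y\<in>span (set (xs n)). 1/2 \<le> norm (x n - y))" for n
    unfolding x_def using g[OF _ inv] by simp
  have mono: "i < j \<Longrightarrow> x i \<in> set (xs j)" for i j
  proof (induction j)
    case 0 then show ?case by simp
  next
    case (Suc j) then show ?case by (auto simp: xsS x_def less_Suc_eq)
  qed
  show False
  proof (rule cpt_sep[OF assms, of x "1/2"])
    show "norm (x n) \<le> 1" for n using xp[of n] by simp
    show "(0::real) < 1/2" by simp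
    fix i j :: nat assume "i < j"
    then have "x i \<in> set (xs j)" by (rule mono)
    then have "x i \<in> span (set (xs j))" by (rule span_base)
    then have "1/2 \<le> norm (x j - x i)" using xp[of j] by blast
    moreover have "K (x i) = x i" "K (x j) = x j" using xp[of i] xp[of j] unfolding F_def by auto
    ultimately show "1/2 \<le> norm (K (x i) - K (x j))" by (simp add: norm_minus_commute)
  qed
qed

lemma scaleC_zero_right: "scaleC c (0::'a::complex_banach) = 0"
  using scaleC_add_right[of c "0::'a" 0] by simp

lemma scaleC_diff_right: "scaleC c (x - y) = scaleC c x - scaleC c (y::'a::complex_banach)"
  using scaleC_add_right[of c "x - y" y] by (simp add: eq_diff_eq)

lemma cpt_zero: "cpt (\<lambda>x::'a::real_normed_vector. 0::'b::real_normed_vector)"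
  unfolding cpt_def
proof (intro conjI allI impI)
  show "bounded_linear (\<lambda>x::'a. 0::'b)" by (rule bounded_linear_zero)
  fix x :: "nat \<Rightarrow> 'a"
  show "\<exists>(r::nat\<Rightarrow>nat) l. strict_mono r \<and> (\<lambda>n. (0::'b)) \<longlonglongrightarrow> l"
    apply (rule exI[of _ "\<lambda>n. n"])
    apply (rule exI[of _ 0])
    apply (rule conjI)
     apply (simp add: strict_mono_def)
    apply (rule tendsto_const)
    done
qed

locale fr =
  fixes K :: "'a::complex_banach \<Rightarrow> 'a"
  assumes cptK: "cpt K" and cK: "\<And>c x. K (scaleC c x) = scaleC c (K x)"
begin

definition A where "A x = x - K x"

lemma blK: "bounded_linear K" using cptK by (rule cpt_bl)
lemma linK: "linear K" using blK bounded_linear.linear by blast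

lemma blA: "bounded_linear A"
  unfolding A_def[abs_def] by (intro bounded_linear_sub bounded_linear_ident blK)

lemma linA: "linear A" using blA bounded_linear.linear by blast

lemma cA: "A (scaleC c x) = scaleC c (A x)"
  unfolding A_def by (simp add: cK scaleC_diff_right)

lemma pow_props:
  "bounded_linear (A ^^ n) \<and> (\<forall>c x. (A ^^ n) (scaleC c x) = scaleC c ((A ^^ n) x))
   \<and> (\<exists>Kn. cpt Kn \<and> (A ^^ n) = (\<lambda>x. x - Kn x))"
proof (induction n)
  case 0
  have "(A ^^ 0) = (\<lambda>x. x - (\<lambda>x. 0) x)" by (simp add: id_def)
  moreover have "bounded_linear (A ^^ 0)" by (simp add: id_def bounded_linear_ident)
  moreover have "\<forall>c x. (A ^^ 0) (scaleC c x) = scaleC c ((A ^^ 0) x)" by simp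
  ultimately show ?case using cpt_zero by blast
next
  case (Suc n)
  then obtain Kn where Kn: "cpt Kn" "(A ^^ n) = (\<lambda>x. x - Kn x)" by blast
  have bl: "bounded_linear (A ^^ Suc n)"
    using bounded_linear_compose[OF blA, of "A ^^ n"] Suc.IH by (simp add: o_def)
  have cl: "\<forall>c x. (A ^^ Suc n) (scaleC c x) = scaleC c ((A ^^ Suc n) x)"
    using Suc.IH by (simp add: cA)
  define K' where "K' x = K x + A (Kn x)" for x
  have "cpt (\<lambda>x. A (Kn x))" by (rule cpt_comp_left[OF blA Kn(1)])
  then have "cpt K'" unfolding K'_def[abs_def] by (rule cpt_add[OF cptK])
  moreover have "(A ^^ Suc n) = (\<lambda>x. x - K' x)"
  proof
    fix x
    have "(A ^^ Suc n) x = A (x - Kn x)" using Kn(2) by simp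
    also have "\<dots> = x - K' x" unfolding A_def K'_def by (simp add: linear_diff[OF linK] algebra_simps)
    finally show "(A ^^ Suc n) x = x - K' x" .
  qed
  ultimately show ?case using bl cl by blast
qed

lemma bl_pow: "bounded_linear (A ^^ n)" using pow_props by blast
lemma lin_pow: "linear (A ^^ n)" using bl_pow bounded_linear.linear by blast
lemma c_pow: "(A ^^ n) (scaleC c x) = scaleC c ((A ^^ n) x)" using pow_props by blast
lemma pow_0: "(A ^^ n) 0 = 0" using linear_0[OF lin_pow] .
lemma pow_diff: "(A ^^ n) (x - y) = (A ^^ n) x - (A ^^ n) y" using linear_diff[OF lin_pow] .
lemma pow_add: "(A ^^ n) (x + y) = (A ^^ n) x + (A ^^ n) y" using linear_add[OF lin_pow] .
lemma pw_add: "(A ^^ (i + j)) x = (A ^^ i) ((A ^^ j) x)" by (simp add: funpow_add)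
lemma pw_Suc: "(A ^^ Suc i) x = A ((A ^^ i) x)" by simp
lemma pw_Suc': "(A ^^ Suc i) x = (A ^^ i) (A x)" by (simp add: funpow_swap1)

definition ker where "ker n = {x. (A ^^ n) x = 0}"
definition rg where "rg n = range (A ^^ n)"

lemma sub_ker: "subspace (ker n)"
  unfolding ker_def subspace_def by (simp add: pow_0 pow_add linear_scale[OF lin_pow])

lemma sub_rg: "subspace (rg n)"
  unfolding rg_def subspace_def
proof (intro conjI ballI allI)
  show "0 \<in> range (A ^^ n)" using pow_0[of n] by (metis rangeI)
  fix x y assume "x \<in> range (A ^^ n)" "y \<in> range (A ^^ n)"
  then obtain u v where "x = (A ^^ n) u" "y = (A ^^ n) v" by blast
  then show "x + y \<in> range (A ^^ n)" using pow_add[of n u v] by (metis rangeI)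
next
  fix c :: real and x assume "x \<in> range (A ^^ n)"
  then obtain u where "x = (A ^^ n) u" by blast
  then show "c *\<^sub>R x \<in> range (A ^^ n)" using linear_scale[OF lin_pow, of n c u] by (metis rangeI)
qed

lemma closed_ker: "closed (ker n)"
  unfolding ker_def by (rule closed_kernel[OF bl_pow])

lemma closed_rg: "closed (rg n)"
proof -
  obtain Kn where Kn: "cpt Kn" "(A ^^ n) = (\<lambda>x. x - Kn x)" using pow_props by blast
  show ?thesis unfolding rg_def Kn(2) by (rule cpt_closed_range[OF Kn(1)])
qed

lemma ker_mono: "i \<le> j \<Longrightarrow> ker i \<subseteq> ker j"
proof
  fix x assume ij: "i \<le> j" and x: "x \<in> ker i"
  have "(A ^^ j) x = (A ^^ (j - i + i)) x" using ij by simp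
  also have "\<dots> = (A ^^ (j - i)) ((A ^^ i) x)" by (rule pw_add)
  also have "\<dots> = 0" using x by (simp add: ker_def pow_0)
  finally show "x \<in> ker j" by (simp add: ker_def)
qed

lemma rg_anti: "i \<le> j \<Longrightarrow> rg j \<subseteq> rg i"
proof
  fix y assume ij: "i \<le> j" and y: "y \<in> rg j"
  then obtain v where v: "y = (A ^^ j) v" by (auto simp: rg_def)
  have "(A ^^ j) v = (A ^^ (i + (j - i))) v" using ij by simp
  also have "\<dots> = (A ^^ i) ((A ^^ (j - i)) v)" by (rule pw_add)
  finally show "y \<in> rg i" using v by (simp add: rg_def)
qed

lemma K_eq: "K z = z - A z" unfolding A_def by simp

lemma ascent: "\<exists>p. ker (Suc p) \<subseteq> ker p"
proof (rule ccontr)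
  assume neg: "\<not> ?thesis"
  have "\<exists>z. z \<in> ker (Suc p) \<and> norm z = 1 \<and> (\<forall>y\<in>ker p. 1/2 \<le> norm (z - y))" for p
  proof -
    obtain z0 where z0: "z0 \<in> ker (Suc p)" "z0 \<notin> ker p" using neg by blast
    have "ker p \<subseteq> ker (Suc p)" by (rule ker_mono) simp
    from riesz[OF sub_ker closed_ker sub_ker this z0] show ?thesis by blast
  qed
  then have "\<forall>p. \<exists>z. z \<in> ker (Suc p) \<and> norm z = 1 \<and> (\<forall>y\<in>ker p. 1/2 \<le> norm (z - y))" by blast
  then have "\<exists>z. \<forall>p. z p \<in> ker (Suc p) \<and> norm (z p) = 1 \<and> (\<forall>y\<in>ker p. 1/2 \<le> norm (z p - y))"
    by (rule choice)
  then obtain z where z: "\<And>p. z p \<in> ker (Suc p)" "\<And>p. norm (z p) = 1"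
    "\<And>p y. y \<in> ker p \<Longrightarrow> 1/2 \<le> norm (z p - y)" by blast
  show False
  proof (rule cpt_sep[OF cptK, of z "1/2"])
    show "norm (z n) \<le> 1" for n using z(2)[of n] by simp
    show "(0::real) < 1/2" by simp
    fix i j :: nat assume ij: "i < j"
    have a1: "A (z j) \<in> ker j" using z(1)[of j] by (simp add: ker_def funpow_swap1)
    have a2: "z i \<in> ker j" using z(1)[of i] ker_mono[of "Suc i" j] ij by auto
    have a3: "A (z i) \<in> ker j"
    proof -
      have "A (z i) \<in> ker i" using z(1)[of i] by (simp add: ker_def funpow_swap1)
      then show ?thesis using ker_mono[of i j] ij by auto
    qed
    have w: "A (z j) + z i - A (z i) \<in> ker j"
      using a1 a2 a3 sub_ker[of j] by (intro subspace_diff subspace_add) auto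
    have "K (z j) - K (z i) = z j - (A (z j) + z i - A (z i))" by (simp add: K_eq algebra_simps)
    then have "1/2 \<le> norm (K (z j) - K (z i))" using z(3)[OF w] by simp
    then show "1/2 \<le> norm (K (z i) - K (z j))" by (simp add: norm_minus_commute)
  qed
qed

lemma descent: "\<exists>q. rg q \<subseteq> rg (Suc q)"
proof (rule ccontr)
  assume neg: "\<not> ?thesis"
  have "\<exists>z. z \<in> rg q \<and> norm z = 1 \<and> (\<forall>y\<in>rg (Suc q). 1/2 \<le> norm (z - y))" for q
  proof -
    obtain z0 where z0: "z0 \<in> rg q" "z0 \<notin> rg (Suc q)" using neg by blast
    have "rg (Suc q) \<subseteq> rg q" by (rule rg_anti) simp
    from riesz[OF sub_rg closed_rg sub_rg this z0] show ?thesis by blast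
  qed
  then have "\<forall>q. \<exists>z. z \<in> rg q \<and> norm z = 1 \<and> (\<forall>y\<in>rg (Suc q). 1/2 \<le> norm (z - y))" by blast
  then have "\<exists>z. \<forall>q. z q \<in> rg q \<and> norm (z q) = 1 \<and> (\<forall>y\<in>rg (Suc q). 1/2 \<le> norm (z q - y))"
    by (rule choice)
  then obtain z where z: "\<And>q. z q \<in> rg q" "\<And>q. norm (z q) = 1"
    "\<And>q y. y \<in> rg (Suc q) \<Longrightarrow> 1/2 \<le> norm (z q - y)" by blast
  have Arg: "A y \<in> rg (Suc q)" if yq: "y \<in> rg q" for y q
  proof -
    obtain v where "y = (A ^^ q) v" using yq by (auto simp: rg_def)
    then have "A y = (A ^^ Suc q) v" by simp
    then show ?thesis by (simp add: rg_def)
  qed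
  show False
  proof (rule cpt_sep[OF cptK, of z "1/2"])
    show "norm (z n) \<le> 1" for n using z(2)[of n] by simp
    show "(0::real) < 1/2" by simp
    fix i j :: nat assume ij: "i < j"
    have a1: "A (z i) \<in> rg (Suc i)" using Arg z(1) by blast
    have a2: "z j \<in> rg (Suc i)" using z(1)[of j] rg_anti[of "Suc i" j] ij by auto
    have a3: "A (z j) \<in> rg (Suc i)" using Arg[OF z(1)[of j]] rg_anti[of "Suc i" "Suc j"] ij by auto
    have w: "A (z i) + z j - A (z j) \<in> rg (Suc i)"
      using a1 a2 a3 sub_rg[of "Suc i"] by (intro subspace_diff subspace_add) auto
    have "K (z i) - K (z j) = z i - (A (z i) + z j - A (z j))" by (simp add: K_eq algebra_simps)
    then show "1/2 \<le> norm (K (z i) - K (z j))" using z(3)[OF w] by simp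
  qed
qed

end

context fr begin

lemma ker_stab: assumes "ker (Suc p) \<subseteq> ker p" shows "ker (p + k) \<subseteq> ker p"
proof (induction k)
  case 0 then show ?case by simp
next
  case (Suc k)
  show ?case
  proof
    fix x assume x: "x \<in> ker (p + Suc k)"
    have "(A ^^ (Suc p + k)) x = 0" using x by (simp add: ker_def)
    then have "(A ^^ k) x \<in> ker (Suc p)" by (simp add: ker_def pw_add)
    then have "(A ^^ k) x \<in> ker p" using assms by blast
    then have "(A ^^ (p + k)) x = 0" by (simp add: ker_def pw_add[of p k])
    then have "x \<in> ker (p + k)" by (simp add: ker_def)
    then show "x \<in> ker p" using Suc.IH by blast
  qed
qed

lemma rg_stab: assumes "rg q \<subseteq> rg (Suc q)" shows "rg q \<subseteq> rg (q + k)"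
proof (induction k)
  case 0 then show ?case by simp
next
  case (Suc k)
  show ?case
  proof
    fix y assume "y \<in> rg q"
    then have "y \<in> rg (q + k)" using Suc.IH by blast
    then obtain u where u: "y = (A ^^ (k + q)) u" by (auto simp: rg_def add.commute)
    have "(A ^^ q) u \<in> rg (Suc q)" using assms by (auto simp: rg_def)
    then obtain w where w: "(A ^^ q) u = (A ^^ Suc q) w" by (auto simp: rg_def)
    have "y = (A ^^ k) ((A ^^ Suc q) w)" using u w by (simp add: pw_add)
    also have "\<dots> = (A ^^ (k + Suc q)) w" by (simp add: pw_add funpow_swap1)
    finally show "y \<in> rg (q + Suc k)" by (simp add: rg_def add.commute)
  qed
qed

lemma exists_m:
  "\<exists>m. ker (m + m) \<subseteq> ker m \<and> rg m \<subseteq> rg (Suc m) \<and> rg m \<subseteq> rg (m + m) \<and> ker (Suc 0) \<subseteq> ker m"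
proof -
  obtain p where p: "ker (Suc p) \<subseteq> ker p" using ascent by blast
  obtain q where q: "rg q \<subseteq> rg (Suc q)" using descent by blast
  define m where "m = p + q"
  have k1: "ker (m + m) \<subseteq> ker m"
  proof -
    have "ker (m + m) = ker (p + (q + m))" by (simp add: m_def add.assoc)
    also have "\<dots> \<subseteq> ker p" by (rule ker_stab[OF p])
    also have "\<dots> \<subseteq> ker m" by (rule ker_mono) (simp add: m_def)
    finally show ?thesis .
  qed
  have r1: "rg m \<subseteq> rg (m + k)" for k
  proof -
    have "rg m \<subseteq> rg q" by (rule rg_anti) (simp add: m_def)
    also have "\<dots> \<subseteq> rg (q + (p + k))" by (rule rg_stab[OF q])
    also have "q + (p + k) = m + k" by (simp add: m_def)
    finally show ?thesis .
  qed
  have k2: "ker (Suc 0) \<subseteq> ker m"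
  proof -
    have "ker (Suc 0) \<subseteq> ker (p + Suc 0)" by (rule ker_mono) simp
    also have "\<dots> \<subseteq> ker p" by (rule ker_stab[OF p])
    also have "\<dots> \<subseteq> ker m" by (rule ker_mono) (simp add: m_def)
    finally show ?thesis .
  qed
  show ?thesis using k1 k2 r1[of 1] r1[of m] by auto
qed

end

locale fr2 = fr +
  fixes m :: nat
  assumes kmm: "ker (m + m) \<subseteq> ker m" and rS: "rg m \<subseteq> rg (Suc m)" and rmm: "rg m \<subseteq> rg (m + m)"
    and k1: "ker (Suc 0) \<subseteq> ker m"
begin

lemma NM: "x \<in> ker m \<Longrightarrow> x \<in> rg m \<Longrightarrow> x = 0"
proof -
  assume xN: "x \<in> ker m" and xM: "x \<in> rg m"
  then obtain v where v: "x = (A ^^ m) v" by (auto simp: rg_def)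
  have "(A ^^ (m + m)) v = 0" using xN v by (simp add: ker_def pw_add)
  then have "v \<in> ker m" using kmm by (auto simp: ker_def)
  then show "x = 0" using v by (simp add: ker_def)
qed

lemma decomp: "\<exists>u. u \<in> rg m \<and> y - u \<in> ker m"
proof -
  have "(A ^^ m) y \<in> rg (m + m)" using rmm by (auto simp: rg_def)
  then obtain w where w: "(A ^^ m) y = (A ^^ (m + m)) w" by (auto simp: rg_def)
  define u where "u = (A ^^ m) w"
  have "u \<in> rg m" by (simp add: u_def rg_def)
  moreover have "y - u \<in> ker m" using w by (simp add: ker_def u_def pow_diff pw_add)
  ultimately show ?thesis by blast
qed

lemma AM: "x \<in> rg m \<Longrightarrow> A x \<in> rg m"
proof -
  assume "x \<in> rg m"
  then obtain v where "x = (A ^^ m) v" by (auto simp: rg_def)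
  then have "A x = (A ^^ m) (A v)" by (simp add: funpow_swap1)
  then show "A x \<in> rg m" by (simp add: rg_def)
qed

lemma AN: "x \<in> ker m \<Longrightarrow> A x \<in> ker m"
proof -
  assume "x \<in> ker m"
  then have "A ((A ^^ m) x) = 0" using linear_0[OF linA] by (simp add: ker_def)
  then show "A x \<in> ker m" by (simp add: ker_def funpow_swap1)
qed

lemma onto: "u \<in> rg m \<Longrightarrow> \<exists>x. x \<in> rg m \<and> A x = u"
proof -
  assume "u \<in> rg m"
  then have "u \<in> rg (Suc m)" using rS by blast
  then obtain w where "u = (A ^^ Suc m) w" by (auto simp: rg_def)
  then have "u = A ((A ^^ m) w)" by simp
  moreover have "(A ^^ m) w \<in> rg m" by (simp add: rg_def)
  ultimately show ?thesis by blast
qed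

lemma injM: "x \<in> rg m \<Longrightarrow> A x = 0 \<Longrightarrow> x = 0"
proof -
  assume xM: "x \<in> rg m" and Ax: "A x = 0"
  have "x \<in> ker (Suc 0)" using Ax by (simp add: ker_def)
  then have "x \<in> ker m" using k1 by blast
  then show "x = 0" using NM xM by blast
qed

lemma M_scaleC: "x \<in> rg m \<Longrightarrow> scaleC c x \<in> rg m"
proof -
  assume "x \<in> rg m"
  then obtain v where "x = (A ^^ m) v" by (auto simp: rg_def)
  then have "scaleC c x = (A ^^ m) (scaleC c v)" by (simp add: c_pow)
  then show ?thesis by (simp add: rg_def)
qed

lemma N_scaleC: "x \<in> ker m \<Longrightarrow> scaleC c x \<in> ker m"
  by (simp add: ker_def c_pow scaleC_zero_right)

lemma M_add: "x \<in> rg m \<Longrightarrow> y \<in> rg m \<Longrightarrow> x + y \<in> rg m"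
  using sub_rg subspace_add by blast
lemma M_diff: "x \<in> rg m \<Longrightarrow> y \<in> rg m \<Longrightarrow> x - y \<in> rg m"
  using sub_rg subspace_diff by blast
lemma N_add: "x \<in> ker m \<Longrightarrow> y \<in> ker m \<Longrightarrow> x + y \<in> ker m"
  using sub_ker subspace_add by blast
lemma N_diff: "x \<in> ker m \<Longrightarrow> y \<in> ker m \<Longrightarrow> x - y \<in> ker m"
  using sub_ker subspace_diff by blast

definition PM where "PM y = (THE u. u \<in> rg m \<and> y - u \<in> ker m)"

lemma PM_unique: "u \<in> rg m \<Longrightarrow> y - u \<in> ker m \<Longrightarrow> u' \<in> rg m \<Longrightarrow> y - u' \<in> ker m \<Longrightarrow> u = u'"
proof -
  assume a: "u \<in> rg m" "y - u \<in> ker m" "u' \<in> rg m" "y - u' \<in> ker m"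
  have "u - u' \<in> rg m" using a M_diff by blast
  moreover have "u - u' \<in> ker m"
  proof -
    have "(y - u') - (y - u) \<in> ker m" using a N_diff by blast
    then show ?thesis by simp
  qed
  ultimately show "u = u'" using NM by fastforce
qed

lemma PM_prop: "PM y \<in> rg m \<and> y - PM y \<in> ker m"
proof -
  obtain u where u: "u \<in> rg m" "y - u \<in> ker m" using decomp by blast
  have "\<exists>!u. u \<in> rg m \<and> y - u \<in> ker m" using u PM_unique by blast
  then show ?thesis unfolding PM_def by (rule theI')
qed

lemma PM_eq: "u \<in> rg m \<Longrightarrow> y - u \<in> ker m \<Longrightarrow> PM y = u"
  using PM_prop PM_unique by blast

lemma PM_add: "PM (x + y) = PM x + PM y"
proof (rule PM_eq)
  show "PM x + PM y \<in> rg m" using PM_prop M_add by blast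
  have "(x - PM x) + (y - PM y) \<in> ker m" using PM_prop N_add by blast
  then show "x + y - (PM x + PM y) \<in> ker m" by (simp add: algebra_simps)
qed

lemma PM_scaleC: "PM (scaleC c x) = scaleC c (PM x)"
proof (rule PM_eq)
  show "scaleC c (PM x) \<in> rg m" using PM_prop M_scaleC by blast
  have "scaleC c (x - PM x) \<in> ker m" using PM_prop N_scaleC by blast
  then show "scaleC c x - scaleC c (PM x) \<in> ker m" by (simp add: scaleC_diff_right)
qed

lemma PM_A: "PM (A y) = A (PM y)"
proof (rule PM_eq)
  show "A (PM y) \<in> rg m" using PM_prop AM by blast
  have "A (y - PM y) \<in> ker m" using PM_prop AN by blast
  then show "A y - A (PM y) \<in> ker m" by (simp add: linear_diff[OF linA])
qed

lemma Bm_PM: "(A ^^ m) (PM y) = (A ^^ m) y"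
proof -
  have "(A ^^ m) (y - PM y) = 0" using PM_prop by (simp add: ker_def)
  then show ?thesis by (simp add: pow_diff)
qed

lemma PM_bound: "\<exists>C. \<forall>y. norm (PM y) \<le> norm y * C"
proof -
  obtain Km where Km: "cpt Km" "(A ^^ m) = (\<lambda>x. x - Km x)" using pow_props by blast
  have "\<exists>C>0. \<forall>x\<in>rg m. norm x \<le> C * norm (x - Km x)"
  proof (rule cpt_bdd_below[OF Km(1) closed_rg sub_rg])
    fix x assume "x \<in> rg m" "x - Km x = 0"
    then show "x = 0" using NM Km(2) by (simp add: ker_def)
  qed
  then obtain C1 where C1: "C1 > 0" "\<And>x. x \<in> rg m \<Longrightarrow> norm x \<le> C1 * norm ((A ^^ m) x)"
    using Km(2) by auto
  obtain nb where nb: "\<And>x. norm ((A ^^ m) x) \<le> norm x * nb"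
    using bounded_linear.bounded[OF bl_pow] by blast
  have "norm (PM y) \<le> norm y * (C1 * nb)" for y
  proof -
    have "norm (PM y) \<le> C1 * norm ((A ^^ m) (PM y))" using C1(2) PM_prop by blast
    also have "\<dots> = C1 * norm ((A ^^ m) y)" by (simp add: Bm_PM)
    also have "\<dots> \<le> C1 * (norm y * nb)" using C1(1) nb by (intro mult_left_mono) auto
    finally show ?thesis by (simp add: algebra_simps)
  qed
  then show ?thesis by blast
qed

definition Q where "Q y = (THE x. x \<in> rg m \<and> A x = PM y)"

lemma Q_unique: "x \<in> rg m \<Longrightarrow> A x = u \<Longrightarrow> x' \<in> rg m \<Longrightarrow> A x' = u \<Longrightarrow> x = x'"
proof -
  assume a: "x \<in> rg m" "A x = u" "x' \<in> rg m" "A x' = u"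
  have "x - x' \<in> rg m" using a M_diff by blast
  moreover have "A (x - x') = 0" using a by (simp add: linear_diff[OF linA])
  ultimately show "x = x'" using injM by fastforce
qed

lemma Q_prop: "Q y \<in> rg m \<and> A (Q y) = PM y"
proof -
  obtain x where x: "x \<in> rg m" "A x = PM y" using onto PM_prop by blast
  have "\<exists>!x. x \<in> rg m \<and> A x = PM y" using x Q_unique by blast
  then show ?thesis unfolding Q_def by (rule theI')
qed

lemma Q_eq: "x \<in> rg m \<Longrightarrow> A x = PM y \<Longrightarrow> Q y = x"
  using Q_prop Q_unique by blast

lemma Q_add: "Q (x + y) = Q x + Q y"
proof (rule Q_eq)
  show "Q x + Q y \<in> rg m" using Q_prop M_add by blast
  show "A (Q x + Q y) = PM (x + y)" using Q_prop by (simp add: linear_add[OF linA] PM_add)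
qed

lemma Q_scaleC: "Q (scaleC c x) = scaleC c (Q x)"
proof (rule Q_eq)
  show "scaleC c (Q x) \<in> rg m" using Q_prop M_scaleC by blast
  show "A (scaleC c (Q x)) = PM (scaleC c x)" using Q_prop by (simp add: cA PM_scaleC)
qed

lemma Q_scaleR: "Q (r *\<^sub>R x) = r *\<^sub>R Q x"
  by (simp add: scaleR_scaleC Q_scaleC)

lemma Q_bound: "\<exists>C. \<forall>y. norm (Q y) \<le> norm y * C"
proof -
  have "\<exists>C>0. \<forall>x\<in>rg m. norm x \<le> C * norm (x - K x)"
  proof (rule cpt_bdd_below[OF cptK closed_rg sub_rg])
    fix x assume "x \<in> rg m" "x - K x = 0"
    then show "x = 0" using injM by (simp add: A_def)
  qed
  then obtain C2 where C2: "C2 > 0" "\<And>x. x \<in> rg m \<Longrightarrow> norm x \<le> C2 * norm (A x)"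
    by (auto simp: A_def)
  obtain C1 where C1: "\<And>y. norm (PM y) \<le> norm y * C1" using PM_bound by blast
  have "norm (Q y) \<le> norm y * (C2 * C1)" for y
  proof -
    have "norm (Q y) \<le> C2 * norm (A (Q y))" using C2(2) Q_prop by blast
    also have "\<dots> = C2 * norm (PM y)" using Q_prop by simp
    also have "\<dots> \<le> C2 * (norm y * C1)" using C2(1) C1 by (intro mult_left_mono) auto
    finally show ?thesis by (simp add: algebra_simps)
  qed
  then show ?thesis by blast
qed

lemma Q_bcl: "bounded_clinear Q"
  unfolding bounded_clinear_def
proof (intro conjI allI)
  obtain C where "\<And>y. norm (Q y) \<le> norm y * C" using Q_bound by blast
  then show "bounded_linear Q" by (intro bounded_linear_intro[of Q C] Q_add Q_scaleR)
  show "Q (scaleC c x) = scaleC c (Q x)" for c x by (rule Q_scaleC)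
qed

lemma QA: "y - Q (A y) \<in> ker m"
proof -
  have "Q (A y) = PM y" by (rule Q_eq) (use PM_prop PM_A in auto)
  then show ?thesis using PM_prop by simp
qed

lemma ker_fin: "\<exists>S. finite S \<and> ker m \<subseteq> span S"
proof -
  obtain Km where Km: "cpt Km" "(A ^^ m) = (\<lambda>x. x - Km x)" using pow_props by blast
  have "ker m = {x. x - Km x = 0}" by (simp add: ker_def Km(2))
  then show ?thesis using cpt_fixed_finite[OF Km(1)] by simp
qed

end

context fr begin

lemma fredholm: "\<exists>Q S. bounded_clinear Q \<and> finite S \<and> (\<forall>y. y - Q (y - K y) \<in> span S)"
proof -
  obtain m where m: "ker (m + m) \<subseteq> ker m" "rg m \<subseteq> rg (Suc m)" "rg m \<subseteq> rg (m + m)" "ker (Suc 0) \<subseteq> ker m"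
    using exists_m by blast
  interpret f2: fr2 K m by unfold_locales (use m in auto)
  obtain S where S: "finite S" "ker m \<subseteq> span S" using f2.ker_fin by blast
  have "\<forall>y. y - f2.Q (y - K y) \<in> span S" using f2.QA S(2) by (auto simp: A_def)
  then show ?thesis using f2.Q_bcl S(1) by blast
qed

end

lemma bcl_bl: "bounded_clinear f \<Longrightarrow> bounded_linear f" by (simp add: bounded_clinear_def)
lemma bcl_lin: "bounded_clinear f \<Longrightarrow> linear f" using bcl_bl bounded_linear.linear by blast
lemma bcl_scaleC: "bounded_clinear f \<Longrightarrow> f (scaleC c x) = scaleC c (f x)" by (simp add: bounded_clinear_def)

lemma bcl_comp: "bounded_clinear f \<Longrightarrow> bounded_clinear g \<Longrightarrow> bounded_clinear (\<lambda>x. f (g x))"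
  unfolding bounded_clinear_def
  using bounded_linear_compose[of f g] by (auto simp: o_def)

lemma bcl_add: "bounded_clinear f \<Longrightarrow> bounded_clinear g \<Longrightarrow> bounded_clinear (\<lambda>x. f x + g x)"
  unfolding bounded_clinear_def using bounded_linear_add[of f g] by (auto simp: scaleC_add_right)

lemma bcl_diff: "bounded_clinear f \<Longrightarrow> bounded_clinear g \<Longrightarrow> bounded_clinear (\<lambda>x. f x - g x)"
  unfolding bounded_clinear_def using bounded_linear_sub[of f g] by (auto simp: scaleC_diff_right)

lemma bcl_fst: "bounded_clinear (fst :: 'a::complex_banach \<times> 'b::complex_banach \<Rightarrow> 'a)"
  unfolding bounded_clinear_def by (simp add: bounded_linear_fst scaleC_prod_def)

lemma bcl_snd: "bounded_clinear (snd :: 'a::complex_banach \<times> 'b::complex_banach \<Rightarrow> 'b)"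
  unfolding bounded_clinear_def by (simp add: bounded_linear_snd scaleC_prod_def)

lemma bcl_inl: "bounded_clinear (\<lambda>x::'a::complex_banach. (x, 0::'b::complex_banach))"
  unfolding bounded_clinear_def
  by (simp add: bounded_linear_Pair bounded_linear_ident bounded_linear_zero scaleC_prod_def scaleC_zero_right)

lemma bcl_inr: "bounded_clinear (\<lambda>x::'b::complex_banach. (0::'a::complex_banach, x))"
  unfolding bounded_clinear_def
  by (simp add: bounded_linear_Pair bounded_linear_ident bounded_linear_zero scaleC_prod_def scaleC_zero_right)

lemma diag_app: "diag_id T (a, b) = (T a, b)" by (simp add: diag_id_def)

lemma real_span_to_complex:
  assumes "finite B" "v \<in> span B"
  shows "\<exists>c. v = (\<Sum>b\<in>B. scaleC (c b) (b::'a::complex_banach))"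
proof -
  obtain u where "v = (\<Sum>b\<in>B. u b *\<^sub>R b)" using assms span_finite[OF assms(1)] by auto
  then have "v = (\<Sum>b\<in>B. scaleC (complex_of_real (u b)) b)" by (simp add: scaleR_scaleC)
  then show ?thesis by (rule exI[of _ "\<lambda>b. complex_of_real (u b)"])
qed

theorem proposition2p2:
  fixes T :: "'x::complex_banach \<Rightarrow> 'x"
    and S :: "'y::complex_banach \<Rightarrow> 'y"
    and E :: "'y \<times> 'y2::complex_banach \<Rightarrow> 'x \<times> 'x2::complex_banach"
    and F :: "'x \<times> 'x2 \<Rightarrow> 'y \<times> 'y2"
  assumes "compact_op T" and "compact_op S"
    and "invertible_op E" and "invertible_op F"
    and "diag_id T = E \<circ> diag_id S \<circ> F"
  shows "\<exists>G H R. bounded_clinear (G :: 'y \<Rightarrow> 'x) \<and> bounded_clinear (H :: 'x \<Rightarrow> 'y)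
           \<and> finite_rank (R :: 'x \<Rightarrow> 'x) \<and> T = (\<lambda>x. G (S (H x)) + R x)"
proof -
  have bT: "bounded_clinear T" and bS: "bounded_clinear S"
    using assms(1,2) by (auto simp: compact_op_def)
  have bE: "bounded_clinear E" and bF: "bounded_clinear F"
    using assms(3,4) by (auto simp: invertible_op_def)
  obtain Ei where Ei: "bounded_clinear Ei" "Ei \<circ> E = id" "E \<circ> Ei = id"
    using assms(3) by (auto simp: invertible_op_def)
  obtain Fi where Fi: "bounded_clinear Fi" "Fi \<circ> F = id" "F \<circ> Fi = id"
    using assms(4) by (auto simp: invertible_op_def)
  have EiE: "Ei (E p) = p" for p using fun_cong[OF Ei(2), of p] by simp
  have FFi: "F (Fi p) = p" for p using fun_cong[OF Fi(3), of p] by simp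
  have dg: "diag_id T p = E (diag_id S (F p))" for p using fun_cong[OF assms(5), of p] by simp
  have linE: "linear E" using bcl_lin[OF bE] .
  have linEi: "linear Ei" using bcl_lin[OF Ei(1)] .
  have T0: "T 0 = 0" using linear_0[OF bcl_lin[OF bT]] .
  have S0: "S 0 = 0" using linear_0[OF bcl_lin[OF bS]] .
  have Esplit: "E (a, b) = E (a, 0) + E (0, b)" for a b
    using linear_add[OF linE, of "(a, 0)" "(0, b)"] by simp
  have Eisplit: "Ei (a, b) = Ei (a, 0) + Ei (0, b)" for a b
    using linear_add[OF linEi, of "(a, 0)" "(0, b)"] by simp
  define E11 where "E11 y = fst (E (y, 0))" for y
  define E12 where "E12 y' = fst (E (0, y'))" for y'
  define E21 where "E21 y = snd (E (y, 0))" for y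
  define E22 where "E22 y' = snd (E (0, y'))" for y'
  define F11 where "F11 x = fst (F (x, 0))" for x
  define F21 where "F21 x = snd (F (x, 0))" for x
  define F22 where "F22 x' = snd (F (0, x'))" for x'
  define Kk where "Kk y' = snd (Ei (T (fst (Fi (0, y'))), 0))" for y'
  have bE11: "bounded_clinear E11" unfolding E11_def[abs_def]
    by (intro bcl_comp[OF bcl_fst] bcl_comp[OF bE] bcl_inl)
  have bE12: "bounded_clinear E12" unfolding E12_def[abs_def]
    by (intro bcl_comp[OF bcl_fst] bcl_comp[OF bE] bcl_inr)
  have bE21: "bounded_clinear E21" unfolding E21_def[abs_def]
    by (intro bcl_comp[OF bcl_snd] bcl_comp[OF bE] bcl_inl)
  have bE22: "bounded_clinear E22" unfolding E22_def[abs_def]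
    by (intro bcl_comp[OF bcl_snd] bcl_comp[OF bE] bcl_inr)
  have bF11: "bounded_clinear F11" unfolding F11_def[abs_def]
    by (intro bcl_comp[OF bcl_fst] bcl_comp[OF bF] bcl_inl)
  have bF21: "bounded_clinear F21" unfolding F21_def[abs_def]
    by (intro bcl_comp[OF bcl_snd] bcl_comp[OF bF] bcl_inl)
  have bF22: "bounded_clinear F22" unfolding F22_def[abs_def]
    by (intro bcl_comp[OF bcl_snd] bcl_comp[OF bF] bcl_inr)
  have bL1: "bounded_clinear (\<lambda>x. snd (Ei (x, 0)))"
    by (intro bcl_comp[OF bcl_snd] bcl_comp[OF Ei(1)] bcl_inl)
  have bL2: "bounded_clinear (\<lambda>y'. fst (Fi (0, y')))"
    by (intro bcl_comp[OF bcl_fst] bcl_comp[OF Fi(1)] bcl_inr)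
  have bKk: "bounded_clinear Kk" unfolding Kk_def[abs_def]
    using bcl_comp[OF bL1 bcl_comp[OF bT bL2]] by simp
  have cKk: "cpt Kk"
  proof -
    have "cpt (\<lambda>y'. T (fst (Fi (0, y'))))"
      by (rule cpt_comp_right[OF compact_op_cpt[OF assms(1)] bcl_bl[OF bL2]])
    from cpt_comp_left[OF bcl_bl[OF bL1] this] show ?thesis unfolding Kk_def[abs_def] by simp
  qed
  have id23: "T x = E11 (S (F11 x)) + E12 (F21 x) \<and> 0 = E21 (S (F11 x)) + E22 (F21 x)" for x
  proof -
    have fx: "F (x, 0) = (F11 x, F21 x)" by (simp add: F11_def F21_def)
    have "(T x, 0) = diag_id T (x, 0)" by (simp add: diag_app)
    also have "\<dots> = E (diag_id S (F (x, 0)))" by (rule dg)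
    also have "\<dots> = E (S (F11 x), F21 x)" by (simp only: fx diag_app)
    also have "\<dots> = E (S (F11 x), 0) + E (0, F21 x)" by (rule Esplit)
    finally have h: "(T x, 0) = E (S (F11 x), 0) + E (0, F21 x)" .
    have h1: "T x = fst (E (S (F11 x), 0)) + fst (E (0, F21 x))"
      using arg_cong[OF h, of fst] by simp
    have h2: "0 = snd (E (S (F11 x), 0)) + snd (E (0, F21 x))"
      using arg_cong[OF h, of snd] by simp
    show ?thesis using h1 h2 by (simp only: E11_def E12_def E21_def E22_def)
  qed
  have id1: "y' - Kk y' = F22 (E22 y')" for y'
  proof -
    have a: "E12 y' = T (fst (Fi (0, y')))"
    proof -
      have "E (0, y') = E (diag_id S (F (Fi (0, y'))))" by (simp add: FFi diag_app S0)
      also have "\<dots> = diag_id T (Fi (0, y'))" by (simp add: dg)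
      finally show ?thesis unfolding E12_def by (simp add: diag_id_def case_prod_unfold)
    qed
    have b: "snd (Ei (0, x')) = F22 x'" for x'
    proof -
      have "(0, x') = E (diag_id S (F (0, x')))" using dg[of "(0, x')"] by (simp add: diag_app T0)
      then have "Ei (0, x') = Ei (E (diag_id S (F (0, x'))))" by (rule arg_cong)
      then have "Ei (0, x') = diag_id S (F (0, x'))" by (simp only: EiE)
      then show ?thesis unfolding F22_def by (simp add: diag_id_def case_prod_unfold)
    qed
    have "(0, y') = Ei (E (0, y'))" by (simp add: EiE)
    also have "E (0, y') = (E12 y', E22 y')" by (simp add: E12_def E22_def)
    also have "Ei (E12 y', E22 y') = Ei (E12 y', 0) + Ei (0, E22 y')" by (rule Eisplit)
    finally have "(0, y') = Ei (E12 y', 0) + Ei (0, E22 y')" .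
    from arg_cong[OF this, of snd] have "y' = snd (Ei (E12 y', 0)) + snd (Ei (0, E22 y'))" by simp
    then have "y' = Kk y' + F22 (E22 y')" using a b by (simp add: Kk_def)
    then show ?thesis by (simp add: algebra_simps)
  qed
  interpret fr Kk by unfold_locales (use cKk bcl_scaleC[OF bKk] in auto)
  obtain Q Sf where Q: "bounded_clinear Q" "finite Sf" "\<And>y. y - Q (y - Kk y) \<in> span Sf"
    using fredholm by blast
  define G where "G y = E11 y - E12 (Q (F22 (E21 y)))" for y
  define R where "R x = E12 (F21 x - Q (F22 (E22 (F21 x))))" for x
  have bG: "bounded_clinear G" unfolding G_def[abs_def]
    by (intro bcl_diff bE11 bcl_comp[OF bE12] bcl_comp[OF Q(1)] bcl_comp[OF bF22] bE21)
  have bR: "bounded_clinear R" unfolding R_def[abs_def]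
    by (intro bcl_comp[OF bE12] bcl_diff bF21 bcl_comp[OF Q(1)] bcl_comp[OF bF22] bcl_comp[OF bE22])
  have fR: "finite_rank R"
    unfolding finite_rank_def
  proof (intro conjI bR exI[of _ "E12 ` Sf"])
    show "finite (E12 ` Sf)" using Q(2) by simp
    show "range R \<subseteq> {\<Sum>b\<in>E12 ` Sf. scaleC (c b) b | c. True}"
    proof
      fix v assume "v \<in> range R"
      then obtain x where x: "v = R x" by blast
      have "F21 x - Q (F21 x - Kk (F21 x)) \<in> span Sf" by (rule Q(3))
      then have "F21 x - Q (F22 (E22 (F21 x))) \<in> span Sf" by (simp add: id1)
      then have "v \<in> E12 ` span Sf" unfolding x R_def by blast
      then have "v \<in> span (E12 ` Sf)" by (simp add: span_linear_image[OF bcl_lin[OF bE12]])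
      then obtain c where "v = (\<Sum>b\<in>E12 ` Sf. scaleC (c b) b)"
        using real_span_to_complex[of "E12 ` Sf" v] Q(2) by auto
      then show "v \<in> {\<Sum>b\<in>E12 ` Sf. scaleC (c b) b | c. True}" by blast
    qed
  qed
  have eq: "T x = G (S (F11 x)) + R x" for x
  proof -
    have linE12: "linear E12" using bcl_lin[OF bE12] .
    have linQ: "linear Q" using bcl_lin[OF Q(1)] .
    have linF22: "linear F22" using bcl_lin[OF bF22] .
    have e2: "E21 (S (F11 x)) = - E22 (F21 x)" using id23[of x] by (simp add: eq_neg_iff_add_eq_0)
    have "G (S (F11 x)) + R x = E11 (S (F11 x)) + E12 (F21 x)
        - E12 (Q (F22 (E21 (S (F11 x))))) - E12 (Q (F22 (E22 (F21 x))))"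
      unfolding G_def R_def by (simp add: linear_diff[OF linE12])
    also have "E12 (Q (F22 (E21 (S (F11 x))))) = - E12 (Q (F22 (E22 (F21 x))))"
      by (simp add: e2 linear_neg[OF linE12] linear_neg[OF linQ] linear_neg[OF linF22])
    finally show ?thesis using id23[of x] by simp
  qed
  show ?thesis
    using bG bF11 fR eq by (intro exI[of _ G] exI[of _ F11] exI[of _ R]) (auto simp: fun_eq_iff)
qed

end
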